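(* Let $\mathcal{X}=L^p$ for some $p\in\{0,1,\infty\}$, let $\varphi$ be a dynamic LM-measure on $\mathcal{X}$ and let $\mu$ be a projective update rule. If $\varphi$ is $\mu$-acceptance time consistent, then $\varphi$ is weakly acceptance time consistent, i.e. for all $X\in\mathcal{X}$, $s>t$, $m_s\in\bar L^0_s$: $\varphi_s(X)\ge m_s\Rightarrow\varphi_t(X)\ge\operatorname{Essinf}_tm_s$. If $\varphi$ is $\mu$-rejection time consistent, then $\varphi$ is weakly rejection time consistent, i.e. $\varphi_s(X)\le m_s\Rightarrow\varphi_t(X)\le\operatorname{Esssup}_tm_s$ for all such $X,s,t,m_s$.
   Context: Let $(\Omega,\mathcal{F},\{\mathcal{F}_t\}_{t\in\mathbb{T}},P)$ be a filtered probability space, $\mathbb{T}=\{0,\dots,T\}$, $\mathcal{F}_0$ trivial. $\bar L^0_t$ denotes $\mathcal{F}_t$-measurable random variables with values in $[-\infty,\infty]$, $\bar L^0=\bar L^0_T$, $L^p=L^p(\Omega,\mathcal{F}_T,P)$. A dynamic LM-measure is a family $\{\varphi_t\}_{t\in\mathbb{T}}$ of maps $\varphi_t:\mathcal{X}\to\bar L^0_t$ with $1_A\varphi_t(X)=1_A\varphi_t(1_AX)$ for $A\in\mathcal{F}_t$ and $X\le Y\Rightarrow\varphi_t(X)\le\varphi_t(Y)$. An update rule is a family $\{\mu_{t,s}:s>t\}$ of maps $\mu_{t,s}:\bar L^0_s\times\mathcal{X}\to\bar L^0_t$ with $1_A\mu_{t,s}(m,X)=1_A\mu_{t,s}(1_Am,X)$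 for $A\in\mathcal{F}_t$ and $m\ge m'\Rightarrow\mu_{t,s}(m,X)\ge\mu_{t,s}(m',X)$; it is projective if there are maps $\mu_t:\bar L^0\to\bar L^0_t$ with $\mu_{t,s}(m,X)=\mu_t(m)$ for all $s>t$, $X$, $m\in\bar L^0_s$, and $\mu_t(m_t)=m_t$ for $m_t\in\bar L^0_t$. $\varphi$ is $\mu$-acceptance (resp. $\mu$-rejection) time consistent if for all $s>t$, $X$, $m_s\in\bar L^0_s$: $\varphi_s(X)\ge m_s\Rightarrow\varphi_t(X)\ge\mu_{t,s}(m_s,X)$ (resp. with $\le$). $\operatorname{Essinf}_t$ on bounded variables: the largest $\mathcal{F}_t$-measurable random variable a.s. dominated by the argument; on $\bar L^0$: $\operatorname{Essinf}_tX:=\lim_n\operatorname{Essinf}_t(X^+\wedge n)-\lim_n\operatorname{Esssup}_t(X^-\wedge n)$, with $\operatorname{Esssup}_tX=-\operatorname{Essinf}_t(-X)$ and convention $\infty-\infty=-\infty$. *)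

theory Defs
  imports "HOL-Probability.Probability"
begin

(* Random variables are modelled by representatives; all (in)equalities are P-a.s. *)

definition filtered_setting :: "'a measure \<Rightarrow> (nat \<Rightarrow> 'a measure) \<Rightarrow> nat \<Rightarrow> bool" where
  "filtered_setting M F T \<longleftrightarrow> prob_space M
     \<and> (\<forall>t\<le>T. subalgebra M (F t))
     \<and> (\<forall>s t. s \<le> t \<and> t \<le> T \<longrightarrow> sets (F s) \<subseteq> sets (F t))
     \<and> sets (F 0) = {{}, space M}"

definition L0bar :: "(nat \<Rightarrow> 'a measure) \<Rightarrow> nat \<Rightarrow> ('a \<Rightarrow> ereal) set" where
  "L0bar F t = borel_measurable (F t)"

definition Lp_space :: "'a measure \<Rightarrow> (nat \<Rightarrow> 'a measure) \<Rightarrow> nat \<Rightarrow> ennreal \<Rightarrow> ('a \<Rightarrow> real) set" where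
  "Lp_space M F T p = {X. X \<in> borel_measurable (F T)
      \<and> (p = 1 \<longrightarrow> integrable M X)
      \<and> (p = \<infinity> \<longrightarrow> (\<exists>C. AE \<omega> in M. \<bar>X \<omega>\<bar> \<le> C))}"

definition dynamic_LM_measure ::
  "'a measure \<Rightarrow> (nat \<Rightarrow> 'a measure) \<Rightarrow> nat \<Rightarrow> ('a \<Rightarrow> real) set
     \<Rightarrow> (nat \<Rightarrow> ('a \<Rightarrow> real) \<Rightarrow> ('a \<Rightarrow> ereal)) \<Rightarrow> bool" where
  "dynamic_LM_measure M F T \<X> \<phi> \<longleftrightarrow>
     (\<forall>t\<le>T. \<forall>X\<in>\<X>. \<phi> t X \<in> L0bar F t)
   \<and> (\<forall>t\<le>T. \<forall>A\<in>sets (F t). \<forall>X\<in>\<X>.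
        AE \<omega> in M. \<omega> \<in> A \<longrightarrow> \<phi> t X \<omega> = \<phi> t (\<lambda>x. if x \<in> A then X x else 0) \<omega>)
   \<and> (\<forall>t\<le>T. \<forall>X\<in>\<X>. \<forall>Y\<in>\<X>. (AE \<omega> in M. X \<omega> \<le> Y \<omega>) \<longrightarrow>
        (AE \<omega> in M. \<phi> t X \<omega> \<le> \<phi> t Y \<omega>))"

definition update_rule ::
  "'a measure \<Rightarrow> (nat \<Rightarrow> 'a measure) \<Rightarrow> nat \<Rightarrow> ('a \<Rightarrow> real) set
     \<Rightarrow> (nat \<Rightarrow> nat \<Rightarrow> ('a \<Rightarrow> ereal) \<Rightarrow> ('a \<Rightarrow> real) \<Rightarrow> ('a \<Rightarrow> ereal)) \<Rightarrow> bool" where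
  "update_rule M F T \<X> \<mu> \<longleftrightarrow>
     (\<forall>t s. t < s \<and> s \<le> T \<longrightarrow>
        (\<forall>m\<in>L0bar F s. \<forall>X\<in>\<X>. \<mu> t s m X \<in> L0bar F t)
      \<and> (\<forall>A\<in>sets (F t). \<forall>m\<in>L0bar F s. \<forall>X\<in>\<X>.
           AE \<omega> in M. \<omega> \<in> A \<longrightarrow> \<mu> t s m X \<omega> = \<mu> t s (\<lambda>x. if x \<in> A then m x else 0) X \<omega>)
      \<and> (\<forall>m\<in>L0bar F s. \<forall>m'\<in>L0bar F s. \<forall>X\<in>\<X>. (AE \<omega> in M. m' \<omega> \<le> m \<omega>) \<longrightarrow>
           (AE \<omega> in M. \<mu> t s m' X \<omega> \<le> \<mu> t s m X \<omega>)))"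

definition projective_update_rule ::
  "'a measure \<Rightarrow> (nat \<Rightarrow> 'a measure) \<Rightarrow> nat \<Rightarrow> ('a \<Rightarrow> real) set
     \<Rightarrow> (nat \<Rightarrow> nat \<Rightarrow> ('a \<Rightarrow> ereal) \<Rightarrow> ('a \<Rightarrow> real) \<Rightarrow> ('a \<Rightarrow> ereal)) \<Rightarrow> bool" where
  "projective_update_rule M F T \<X> \<mu> \<longleftrightarrow> update_rule M F T \<X> \<mu> \<and>
     (\<exists>\<mu>p :: nat \<Rightarrow> ('a \<Rightarrow> ereal) \<Rightarrow> ('a \<Rightarrow> ereal).
        (\<forall>t<T. \<forall>m\<in>L0bar F T. \<mu>p t m \<in> L0bar F t)
      \<and> (\<forall>t s. t < s \<and> s \<le> T \<longrightarrow> (\<forall>m\<in>L0bar F s. \<forall>X\<in>\<X>.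
           AE \<omega> in M. \<mu> t s m X \<omega> = \<mu>p t m \<omega>))
      \<and> (\<forall>t<T. \<forall>m\<in>L0bar F t. AE \<omega> in M. \<mu>p t m \<omega> = m \<omega>))"

definition acc_time_consistent where
  "acc_time_consistent M F T \<X> \<phi> \<mu> \<longleftrightarrow>
     (\<forall>t s. t < s \<and> s \<le> T \<longrightarrow> (\<forall>X\<in>\<X>. \<forall>m\<in>L0bar F s.
        (AE \<omega> in M. \<phi> s X \<omega> \<ge> m \<omega>) \<longrightarrow> (AE \<omega> in M. \<phi> t X \<omega> \<ge> \<mu> t s m X \<omega>)))"

definition rej_time_consistent where
  "rej_time_consistent M F T \<X> \<phi> \<mu> \<longleftrightarrow>
     (\<forall>t s. t < s \<and> s \<le> T \<longrightarrow> (\<forall>X\<in>\<X>. \<forall>m\<in>L0bar F s.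
        (AE \<omega> in M. \<phi> s X \<omega> \<le> m \<omega>) \<longrightarrow> (AE \<omega> in M. \<phi> t X \<omega> \<le> \<mu> t s m X \<omega>)))"

(* Essinf_t on bounded variables: the largest F_t-measurable random variable a.s. dominated
   by the argument (chosen representative; unique a.s.). *)
definition essinf_bdd :: "'a measure \<Rightarrow> 'a measure \<Rightarrow> ('a \<Rightarrow> ereal) \<Rightarrow> ('a \<Rightarrow> ereal)" where
  "essinf_bdd M Ft X = (SOME Y. Y \<in> borel_measurable Ft \<and> (AE \<omega> in M. Y \<omega> \<le> X \<omega>)
      \<and> (\<forall>Z\<in>borel_measurable Ft. (AE \<omega> in M. Z \<omega> \<le> X \<omega>) \<longrightarrow> (AE \<omega> in M. Z \<omega> \<le> Y \<omega>)))"

definition esssup_bdd :: "'a measure \<Rightarrow> 'a measure \<Rightarrow> ('a \<Rightarrow> ereal) \<Rightarrow> ('a \<Rightarrow> ereal)" where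
  "esssup_bdd M Ft X = (\<lambda>\<omega>. - essinf_bdd M Ft (\<lambda>x. - X x) \<omega>)"

definition ediff :: "ereal \<Rightarrow> ereal \<Rightarrow> ereal" where
  "ediff a b = (if a = \<infinity> \<and> b = \<infinity> then -\<infinity> else a - b)"

(* Essinf_t X := lim_n Essinf_t(X\<^sup>+ \<and> n) - lim_n Esssup_t(X\<^sup>- \<and> n); both sequences are a.s.
   nondecreasing, so their limits are represented by pointwise suprema. *)
definition cond_essinf :: "'a measure \<Rightarrow> 'a measure \<Rightarrow> ('a \<Rightarrow> ereal) \<Rightarrow> ('a \<Rightarrow> ereal)" where
  "cond_essinf M Ft X = (\<lambda>\<omega>.
     ediff (SUP n::nat. essinf_bdd M Ft (\<lambda>x. min (max (X x) 0) (ereal (real n))) \<omega>)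
           (SUP n::nat. esssup_bdd M Ft (\<lambda>x. min (max (- X x) 0) (ereal (real n))) \<omega>))"

definition cond_esssup :: "'a measure \<Rightarrow> 'a measure \<Rightarrow> ('a \<Rightarrow> ereal) \<Rightarrow> ('a \<Rightarrow> ereal)" where
  "cond_esssup M Ft X = (\<lambda>\<omega>. - cond_essinf M Ft (\<lambda>x. - X x) \<omega>)"

end

theory Submission
  imports Defs
begin

lemma ess_core:
  fixes V :: "'a \<Rightarrow> ennreal" and M N :: "'a measure"
  assumes ps: "prob_space M" and sub: "subalgebra M N" and bnd: "\<And>\<omega>. V \<omega> \<le> ennreal B"
  shows "\<exists>Y\<in>borel_measurable N. (AE \<omega> in M. Y \<omega> \<le> V \<omega>) \<and>
     (\<forall>f\<in>borel_measurable N. (AE \<omega> in M. f \<omega> \<le> V \<omega>) \<longrightarrow> (AE \<omega> in M. f \<omega> \<le> Y \<omega>))"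
proof -
  define S where "S = {f \<in> borel_measurable N. AE \<omega> in M. f \<omega> \<le> V \<omega>}"
  define A where "A = (\<lambda>f. enn2ereal (\<integral>\<^sup>+\<omega>. f \<omega> \<partial>M)) ` S"
  have "(\<lambda>_. 0) \<in> S" unfolding S_def by auto
  then have "A \<noteq> {}" unfolding A_def by blast
  then obtain g where g: "incseq g" "range g \<subseteq> A" "Sup A = (SUP i. g i)"
    using Sup_countable_SUP by blast
  have "\<forall>i. \<exists>f\<in>S. g i = enn2ereal (\<integral>\<^sup>+\<omega>. f \<omega> \<partial>M)"
    using g(2) unfolding A_def by blast
  then obtain fs where fs: "\<And>i. fs i \<in> S" "\<And>i. g i = enn2ereal (\<integral>\<^sup>+\<omega>. fs i \<omega> \<partial>M)"
    by metis
  define Y where "Y = (\<lambda>\<omega>. SUP i. fs i \<omega>)"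
  have fsm: "\<And>i. fs i \<in> borel_measurable N" using fs(1) unfolding S_def by auto
  have Ym: "Y \<in> borel_measurable N" unfolding Y_def
    by (rule borel_measurable_SUP) (auto simp: fsm)
  have "AE \<omega> in M. \<forall>i. fs i \<omega> \<le> V \<omega>"
    using fs(1) unfolding S_def by (auto intro: AE_all_countable[THEN iffD2])
  then have YV: "AE \<omega> in M. Y \<omega> \<le> V \<omega>"
    by eventually_elim (auto simp: Y_def intro: SUP_least)
  have mM: "\<And>f. f \<in> borel_measurable N \<Longrightarrow> f \<in> borel_measurable M"
    using measurable_from_subalg[OF sub] by blast
  have fin: "(\<integral>\<^sup>+\<omega>. Y \<omega> \<partial>M) \<noteq> \<infinity>"
  proof -
    have "(\<integral>\<^sup>+\<omega>. Y \<omega> \<partial>M) \<le> (\<integral>\<^sup>+\<omega>. ennreal B \<partial>M)"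
      using YV by (intro nn_integral_mono_AE) (auto elim!: eventually_mono intro: order_trans[OF _ bnd])
    also have "\<dots> = ennreal B"
      using prob_space.emeasure_space_1[OF ps] by simp
    finally show ?thesis by (auto simp: top_unique)
  qed
  have key: "AE \<omega> in M. h \<omega> \<le> Y \<omega>" if hS: "h \<in> S" and Yh: "\<And>\<omega>. Y \<omega> \<le> h \<omega>" for h
  proof -
    have hm: "h \<in> borel_measurable N" using hS unfolding S_def by auto
    have "enn2ereal (\<integral>\<^sup>+\<omega>. h \<omega> \<partial>M) \<le> Sup A"
      using hS unfolding A_def by (auto intro: Sup_upper)
    also have "\<dots> \<le> enn2ereal (\<integral>\<^sup>+\<omega>. Y \<omega> \<partial>M)"
      unfolding g(3)
    proof (rule SUP_least)
      fix i
      have "(\<integral>\<^sup>+\<omega>. fs i \<omega> \<partial>M) \<le> (\<integral>\<^sup>+\<omega>. Y \<omega> \<partial>M)"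
        by (intro nn_integral_mono) (auto simp: Y_def intro: SUP_upper)
      then show "g i \<le> enn2ereal (\<integral>\<^sup>+\<omega>. Y \<omega> \<partial>M)" using fs(2)
        by (simp add: less_eq_ennreal.rep_eq)
    qed
    finally have le: "(\<integral>\<^sup>+\<omega>. h \<omega> \<partial>M) \<le> (\<integral>\<^sup>+\<omega>. Y \<omega> \<partial>M)"
      by (simp add: less_eq_ennreal.rep_eq)
    have "(\<integral>\<^sup>+\<omega>. h \<omega> - Y \<omega> \<partial>M) = (\<integral>\<^sup>+\<omega>. h \<omega> \<partial>M) - (\<integral>\<^sup>+\<omega>. Y \<omega> \<partial>M)"
      using mM[OF hm] mM[OF Ym] fin Yh by (intro nn_integral_diff) auto
    also have "\<dots> = 0" using le fin
      by (simp add: diff_eq_0_iff_ennreal top.not_eq_extremum order_le_less_trans)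
    finally have "AE \<omega> in M. h \<omega> - Y \<omega> = 0"
      using mM[OF hm] mM[OF Ym] by (subst nn_integral_0_iff_AE[symmetric]) auto
    then show ?thesis by eventually_elim (auto dest: ennreal_minus_eq_0)
  qed
  show ?thesis
  proof (intro bexI conjI ballI impI)
    fix f assume fm: "f \<in> borel_measurable N" and fV: "AE \<omega> in M. f \<omega> \<le> V \<omega>"
    have "(\<lambda>\<omega>. max (Y \<omega>) (f \<omega>)) \<in> S"
      unfolding S_def using fm Ym YV fV by auto
    then have "AE \<omega> in M. max (Y \<omega>) (f \<omega>) \<le> Y \<omega>" by (rule key) auto
    then show "AE \<omega> in M. f \<omega> \<le> Y \<omega>" by eventually_elim auto
  qed (use Ym YV in auto)
qed

lemma essinf_bdd_props:
  fixes W :: "'a \<Rightarrow> ereal"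
  assumes ps: "prob_space M" and sub: "subalgebra M N"
    and lo: "\<And>\<omega>. ereal a \<le> W \<omega>" and hi: "\<And>\<omega>. W \<omega> \<le> ereal b"
  shows "essinf_bdd M N W \<in> borel_measurable N \<and> (AE \<omega> in M. essinf_bdd M N W \<omega> \<le> W \<omega>)"
proof -
  define V where "V = (\<lambda>\<omega>. e2ennreal (W \<omega> - ereal a))"
  have Vb: "V \<omega> \<le> ennreal (b - a)" for \<omega>
  proof -
    have "W \<omega> - ereal a \<le> ereal (b - a)" using hi[of \<omega>] by (cases "W \<omega>") auto
    then show ?thesis unfolding V_def by (metis e2ennreal_ereal e2ennreal_mono)
  qed
  obtain Y where Ym: "Y \<in> borel_measurable N" and YV: "AE \<omega> in M. Y \<omega> \<le> V \<omega>"
    and Ymax': "\<forall>f\<in>borel_measurable N. (AE \<omega> in M. f \<omega> \<le> V \<omega>) \<longrightarrow> (AE \<omega> in M. f \<omega> \<le> Y \<omega>)"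
    using ess_core[OF ps sub, of V "b - a", OF Vb] by (elim bexE conjE) 
  have Ymax: "\<And>f. f \<in> borel_measurable N \<Longrightarrow> (AE \<omega> in M. f \<omega> \<le> V \<omega>) \<Longrightarrow> (AE \<omega> in M. f \<omega> \<le> Y \<omega>)"
    using Ymax' by blast
  define Ye where "Ye = (\<lambda>\<omega>. enn2ereal (Y \<omega>) + ereal a)"
  have Yem: "Ye \<in> borel_measurable N" unfolding Ye_def using Ym by (measurable; simp)
  have YeW: "AE \<omega> in M. Ye \<omega> \<le> W \<omega>"
    using YV
  proof eventually_elim
    case (elim \<omega>)
    have "enn2ereal (Y \<omega>) \<le> enn2ereal (V \<omega>)" using elim by (simp only: less_eq_ennreal.rep_eq)
    also have "enn2ereal (V \<omega>) = W \<omega> - ereal a" unfolding V_def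
      using lo[of \<omega>] by (intro enn2ereal_e2ennreal) (cases "W \<omega>"; auto)
    finally show ?case unfolding Ye_def
      by (simp add: ereal_le_minus_iff)
  qed
  have "\<exists>Y. Y \<in> borel_measurable N \<and> (AE \<omega> in M. Y \<omega> \<le> W \<omega>)
      \<and> (\<forall>Z\<in>borel_measurable N. (AE \<omega> in M. Z \<omega> \<le> W \<omega>) \<longrightarrow> (AE \<omega> in M. Z \<omega> \<le> Y \<omega>))"
  proof (intro exI conjI ballI impI)
    fix Z assume Zm: "Z \<in> borel_measurable N" and ZW: "AE \<omega> in M. Z \<omega> \<le> W \<omega>"
    define f where "f = (\<lambda>\<omega>. e2ennreal (Z \<omega> - ereal a))"
    have fm: "f \<in> borel_measurable N" unfolding f_def using Zm by (measurable; simp)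
    have "AE \<omega> in M. f \<omega> \<le> V \<omega>" using ZW
    proof eventually_elim
      case (elim \<omega>)
      then have "Z \<omega> - ereal a \<le> W \<omega> - ereal a" by (intro ereal_minus_mono) auto
      then show ?case unfolding f_def V_def by (rule e2ennreal_mono)
    qed
    then have "AE \<omega> in M. f \<omega> \<le> Y \<omega>" using Ymax[OF fm] by blast
    then show "AE \<omega> in M. Z \<omega> \<le> Ye \<omega>"
    proof eventually_elim
      case (elim \<omega>)
      have "Z \<omega> - ereal a \<le> enn2ereal (f \<omega>)" unfolding f_def
        by (metis e2ennreal_neg enn2ereal_e2ennreal enn2ereal_nonneg linorder_le_cases order_trans)
      also have "\<dots> \<le> enn2ereal (Y \<omega>)" using elim by (simp only: less_eq_ennreal.rep_eq)
      finally show ?case unfolding Ye_def by (simp add: ereal_minus_le_iff)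
    qed
  qed (use Yem YeW in auto)
  from someI_ex[OF this] have "essinf_bdd M N W \<in> borel_measurable N \<and> (AE \<omega> in M. essinf_bdd M N W \<omega> \<le> W \<omega>)"
    unfolding essinf_bdd_def by blast
  then show ?thesis .
qed

lemma ediff_bound:
  fixes x A B :: ereal
  assumes A: "A \<le> max x 0" and B: "\<And>n::nat. min (max (-x) 0) (ereal (real n)) \<le> B"
  shows "ediff A B \<le> x"
proof (cases x)
  case (real r)
  obtain n :: nat where n: "max (-r) 0 \<le> real n" by (meson real_arch_simple)
  have "ereal (max (-r) 0) \<le> B" using B[of n] n real by (auto simp: min_def max_def zero_ereal_def split: if_splits)
  moreover have "A \<le> ereal (max r 0)" using A real by (auto simp: max_def zero_ereal_def split: if_splits)
  ultimately have "A - B \<le> ereal (max r 0) - ereal (max (-r) 0)" by (intro ereal_minus_mono) 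
  also have "\<dots> = x" using real by (simp add: max_def)
  finally show ?thesis using \<open>A \<le> ereal (max r 0)\<close> unfolding ediff_def by auto
next
  case PInf then show ?thesis by simp
next
  case MInf
  have "B = \<infinity>"
  proof (rule ccontr)
    assume "B \<noteq> \<infinity>"
    have "0 \<le> B" using B[of 0] MInf by (simp add: zero_ereal_def)
    then obtain r where r: "B = ereal r" using \<open>B \<noteq> \<infinity>\<close> by (cases B) auto
    obtain n :: nat where "r < real n" using reals_Archimedean2 by blast
    then show False using B[of n] MInf r by simp
  qed
  moreover have "A \<le> 0" using A MInf by simp
  ultimately show ?thesis using MInf unfolding ediff_def by (cases A) auto
qed

lemma cond_essinf_props:
  assumes ps: "prob_space M" and sub: "subalgebra M N"
  shows "cond_essinf M N m \<in> borel_measurable N \<and> (AE \<omega> in M. cond_essinf M N m \<omega> \<le> m \<omega>)"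
proof -
  define P where "P n = essinf_bdd M N (\<lambda>x. min (max (m x) 0) (ereal (real n)))" for n :: nat
  define Q0 where "Q0 n = essinf_bdd M N (\<lambda>x. - min (max (- m x) 0) (ereal (real n)))" for n :: nat
  have P: "P n \<in> borel_measurable N \<and> (AE \<omega> in M. P n \<omega> \<le> min (max (m \<omega>) 0) (ereal (real n)))" for n
    unfolding P_def by (rule essinf_bdd_props[OF ps sub, of 0 _ "real n"]) (auto simp: zero_ereal_def)
  have Q: "Q0 n \<in> borel_measurable N \<and> (AE \<omega> in M. Q0 n \<omega> \<le> - min (max (- m \<omega>) 0) (ereal (real n)))" for n
    unfolding Q0_def
  proof (rule essinf_bdd_props[OF ps sub, of "- real n" _ 0])
    fix \<omega>
    have "min (max (- m \<omega>) (ereal 0)) (ereal (real n)) \<le> ereal (real n)" by simp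
    then show "ereal (- real n) \<le> - min (max (- m \<omega>) 0) (ereal (real n))"
      unfolding zero_ereal_def by (metis ereal_minus_le_minus uminus_ereal.simps(1))
    have "ereal 0 \<le> min (max (- m \<omega>) (ereal 0)) (ereal (real n))" by simp
    then show "- min (max (- m \<omega>) 0) (ereal (real n)) \<le> ereal 0"
      unfolding zero_ereal_def by (metis ereal_minus_le_minus uminus_ereal.simps(1) minus_zero)
  qed
  have eq: "cond_essinf M N m = (\<lambda>\<omega>. ediff (SUP n. P n \<omega>) (SUP n. - Q0 n \<omega>))"
    unfolding cond_essinf_def P_def Q0_def esssup_bdd_def by simp
  have Pm: "(\<lambda>\<omega>. SUP n. P n \<omega>) \<in> borel_measurable N"
    using P by (intro borel_measurable_SUP) auto
  have Qm: "(\<lambda>\<omega>. SUP n. - Q0 n \<omega>) \<in> borel_measurable N"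
    using Q by (intro borel_measurable_SUP) auto
  have meas: "cond_essinf M N m \<in> borel_measurable N"
    unfolding eq ediff_def using Pm Qm by measurable
  have "AE \<omega> in M. \<forall>n. P n \<omega> \<le> min (max (m \<omega>) 0) (ereal (real n))"
    using P by (auto intro: AE_all_countable[THEN iffD2])
  moreover have "AE \<omega> in M. \<forall>n. Q0 n \<omega> \<le> - min (max (- m \<omega>) 0) (ereal (real n))"
    using Q by (auto intro: AE_all_countable[THEN iffD2])
  ultimately have "AE \<omega> in M. cond_essinf M N m \<omega> \<le> m \<omega>"
  proof eventually_elim
    case (elim \<omega>)
    show ?case unfolding eq
    proof (rule ediff_bound)
      show "(SUP n. P n \<omega>) \<le> max (m \<omega>) 0"
        using elim(1) by (auto intro!: SUP_least elim: order_trans)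
      fix n :: nat
      have "min (max (- m \<omega>) 0) (ereal (real n)) \<le> - Q0 n \<omega>"
        using elim(2) by (metis ereal_minus_le_minus ereal_uminus_uminus)
      also have "\<dots> \<le> (SUP n. - Q0 n \<omega>)" by (rule SUP_upper) auto
      finally show "min (max (- m \<omega>) 0) (ereal (real n)) \<le> (SUP n. - Q0 n \<omega>)" .
    qed
  qed
  with meas show ?thesis by blast
qed

lemma L0bar_mono:
  assumes "filtered_setting M F T" "t \<le> s" "s \<le> T"
  shows "L0bar F t \<subseteq> L0bar F s"
proof -
  have st: "subalgebra M (F t)" "subalgebra M (F s)" "sets (F t) \<subseteq> sets (F s)"
    using assms unfolding filtered_setting_def by auto
  then have "space (F t) = space (F s)" unfolding subalgebra_def by simp
  then show ?thesis unfolding L0bar_def using st(3)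
    by (intro measurable_mono) auto
qed

theorem proposition4p5:
  fixes M :: "'a measure" and F :: "nat \<Rightarrow> 'a measure" and T :: nat and p :: ennreal
    and \<phi> :: "nat \<Rightarrow> ('a \<Rightarrow> real) \<Rightarrow> ('a \<Rightarrow> ereal)"
    and \<mu> :: "nat \<Rightarrow> nat \<Rightarrow> ('a \<Rightarrow> ereal) \<Rightarrow> ('a \<Rightarrow> real) \<Rightarrow> ('a \<Rightarrow> ereal)"
  assumes setting: "filtered_setting M F T"
    and p: "p \<in> {0, 1, \<infinity>}"
    and LM: "dynamic_LM_measure M F T (Lp_space M F T p) \<phi>"
    and proj: "projective_update_rule M F T (Lp_space M F T p) \<mu>"
  shows "(acc_time_consistent M F T (Lp_space M F T p) \<phi> \<mu> \<longrightarrow>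
           (\<forall>t s. t < s \<and> s \<le> T \<longrightarrow> (\<forall>X\<in>Lp_space M F T p. \<forall>m\<in>L0bar F s.
              (AE \<omega> in M. \<phi> s X \<omega> \<ge> m \<omega>) \<longrightarrow>
              (AE \<omega> in M. \<phi> t X \<omega> \<ge> cond_essinf M (F t) m \<omega>))))
       \<and> (rej_time_consistent M F T (Lp_space M F T p) \<phi> \<mu> \<longrightarrow>
           (\<forall>t s. t < s \<and> s \<le> T \<longrightarrow> (\<forall>X\<in>Lp_space M F T p. \<forall>m\<in>L0bar F s.
              (AE \<omega> in M. \<phi> s X \<omega> \<le> m \<omega>) \<longrightarrow>
              (AE \<omega> in M. \<phi> t X \<omega> \<le> cond_esssup M (F t) m \<omega>))))"
proof -
  have ps: "prob_space M" and subs: "\<And>t. t \<le> T \<Longrightarrow> subalgebra M (F t)"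
    using setting unfolding filtered_setting_def by auto
  obtain \<mu>p where
    mup2: "\<forall>t s. t < s \<and> s \<le> T \<longrightarrow> (\<forall>m\<in>L0bar F s. \<forall>X\<in>Lp_space M F T p.
           AE \<omega> in M. \<mu> t s m X \<omega> = \<mu>p t m \<omega>)"
    and mup3: "\<forall>t<T. \<forall>m\<in>L0bar F t. AE \<omega> in M. \<mu>p t m \<omega> = m \<omega>"
  proof -
    from proj have "\<exists>\<mu>p :: nat \<Rightarrow> ('a \<Rightarrow> ereal) \<Rightarrow> ('a \<Rightarrow> ereal).
        (\<forall>t<T. \<forall>m\<in>L0bar F T. \<mu>p t m \<in> L0bar F t)
      \<and> (\<forall>t s. t < s \<and> s \<le> T \<longrightarrow> (\<forall>m\<in>L0bar F s. \<forall>X\<in>Lp_space M F T p.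
           AE \<omega> in M. \<mu> t s m X \<omega> = \<mu>p t m \<omega>))
      \<and> (\<forall>t<T. \<forall>m\<in>L0bar F t. AE \<omega> in M. \<mu>p t m \<omega> = m \<omega>)"
      unfolding projective_update_rule_def by (rule conjunct2)
    then obtain \<mu>p where "(\<forall>t<T. \<forall>m\<in>L0bar F T. \<mu>p t m \<in> L0bar F t)"
      and a: "(\<forall>t s. t < s \<and> s \<le> T \<longrightarrow> (\<forall>m\<in>L0bar F s. \<forall>X\<in>Lp_space M F T p.
           AE \<omega> in M. \<mu> t s m X \<omega> = \<mu>p t m \<omega>))"
      and b: "(\<forall>t<T. \<forall>m\<in>L0bar F t. AE \<omega> in M. \<mu>p t m \<omega> = m \<omega>)"
      by (elim exE conjE)
    show ?thesis by (rule that[OF a b])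
  qed
  have upd: "AE \<omega> in M. \<mu> t s m X \<omega> = m \<omega>"
    if ts: "t < s" "s \<le> T" and m: "m \<in> L0bar F t" and X: "X \<in> Lp_space M F T p" for t s m X
  proof -
    have "m \<in> L0bar F s" using L0bar_mono[OF setting, of t s] ts m by auto
    then have "AE \<omega> in M. \<mu> t s m X \<omega> = \<mu>p t m \<omega>" using ts X by (intro mup2[rule_format]) auto
    moreover have "AE \<omega> in M. \<mu>p t m \<omega> = m \<omega>" using ts m by (intro mup3[rule_format]) auto
    ultimately show ?thesis by eventually_elim simp
  qed
  show ?thesis
  proof (intro conjI impI allI ballI)
    fix t s X m
    assume acc: "acc_time_consistent M F T (Lp_space M F T p) \<phi> \<mu>"
      and ts: "t < s \<and> s \<le> T" and X: "X \<in> Lp_space M F T p" and m: "m \<in> L0bar F s"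
      and hyp: "AE \<omega> in M. m \<omega> \<le> \<phi> s X \<omega>"
    define m' where "m' = cond_essinf M (F t) m"
    have ce: "m' \<in> L0bar F t \<and> (AE \<omega> in M. m' \<omega> \<le> m \<omega>)"
      unfolding m'_def L0bar_def using cond_essinf_props[OF ps subs, of t m] ts by auto
    then have m's: "m' \<in> L0bar F s" using L0bar_mono[OF setting, of t s] ts by auto
    have "AE \<omega> in M. m' \<omega> \<le> \<phi> s X \<omega>" using ce[THEN conjunct2] hyp by eventually_elim auto
    then have "AE \<omega> in M. \<mu> t s m' X \<omega> \<le> \<phi> t X \<omega>"
      using ts X m's by (intro acc[unfolded acc_time_consistent_def, rule_format]) auto
    moreover have "AE \<omega> in M. \<mu> t s m' X \<omega> = m' \<omega>" using ts ce X by (intro upd) auto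
    ultimately show "AE \<omega> in M. cond_essinf M (F t) m \<omega> \<le> \<phi> t X \<omega>"
      unfolding m'_def[symmetric] by eventually_elim simp
  next
    fix t s X m
    assume rej: "rej_time_consistent M F T (Lp_space M F T p) \<phi> \<mu>"
      and ts: "t < s \<and> s \<le> T" and X: "X \<in> Lp_space M F T p" and m: "m \<in> L0bar F s"
      and hyp: "AE \<omega> in M. \<phi> s X \<omega> \<le> m \<omega>"
    define m' where "m' = cond_esssup M (F t) m"
    have ce0: "cond_essinf M (F t) (\<lambda>x. - m x) \<in> borel_measurable (F t) \<and>
        (AE \<omega> in M. cond_essinf M (F t) (\<lambda>x. - m x) \<omega> \<le> - m \<omega>)"
      using cond_essinf_props[OF ps subs, of t "\<lambda>x. - m x"] ts by auto
    have ce: "m' \<in> L0bar F t \<and> (AE \<omega> in M. m \<omega> \<le> m' \<omega>)"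
    proof
      show "m' \<in> L0bar F t" unfolding m'_def cond_esssup_def L0bar_def using ce0[THEN conjunct1] by measurable
      show "AE \<omega> in M. m \<omega> \<le> m' \<omega>" using ce0 unfolding m'_def cond_esssup_def
        by (auto elim!: eventually_mono) (metis ereal_minus_le_minus ereal_uminus_uminus)
    qed
    then have m's: "m' \<in> L0bar F s" using L0bar_mono[OF setting, of t s] ts by auto
    have "AE \<omega> in M. \<phi> s X \<omega> \<le> m' \<omega>" using ce[THEN conjunct2] hyp by eventually_elim auto
    then have "AE \<omega> in M. \<phi> t X \<omega> \<le> \<mu> t s m' X \<omega>"
      using ts X m's by (intro rej[unfolded rej_time_consistent_def, rule_format]) auto
    moreover have "AE \<omega> in M. \<mu> t s m' X \<omega> = m' \<omega>" using ts ce X by (intro upd) auto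
    ultimately show "AE \<omega> in M. \<phi> t X \<omega> \<le> cond_esssup M (F t) m \<omega>"
      unfolding m'_def[symmetric] by eventually_elim simp
  qed
qed

end
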